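(* Let $n\ge 3$ be an integer, let $\Omega\subset\mathbb{R}^2$ be open, and let $\Lambda>0$ and $a_0,\dots,a_n$ be smooth real functions of $(x,y)\in\Omega$. Put $H=\frac{p_1^2+p_2^2}{2\Lambda}$ and $F=\sum_{i=0}^n a_i(x,y)\,p_1^{\,n-i}p_2^{\,i}$, and assume $\{H,F\}=0$ identically in $(x,y,p_1,p_2)$. Assume moreover that there are real constants $c_1,c_2$ with $$a_{n-1}=c_1+\sum_{j\ge 0,\ 2j\le n-3}(-1)^j a_{n-3-2j},\qquad a_n=c_2+\sum_{j\ge 0,\ 2j\le n-2}(-1)^j a_{n-2-2j}.$$ (i) If $n=2k$ is even, set $S_e=\sum_{j=0}^{k-1}(-1)^j(n-2j)a_{2j}$ and $S_o=\sum_{j=0}^{k-2}(-1)^j(n-2-2j)a_{2j+1}$. Then $$\big[S_e\Lambda\big]_x+\big[(-S_o+(-1)^{k+1}(n-1)c_1)\Lambda\big]_y=0,\qquad \big[(S_o+(-1)^{k+1}c_1)\Lambda\big]_x+\big[(S_e+(-1)^{k+1}nc_2)\Lambda\big]_y=0 .$$ (ii) If $n=2k+1$ is odd, set $T_e=\sum_{j=0}^{k-1}(-1)^j(n-1-2j)a_{2j}$ and $T_o=\sum_{j=0}^{k-1}(-1)^j(n-1-2j)a_{2j+1}$. Then $$\big[(T_e+(-1)^{k}c_1)\Lambda\big]_x+\big[(-T_o+(-1)^{k}nc_2)\Lambda\big]_y=0,\qquad \big[T_o\Lambda\big]_x+\big[(T_e+(-1)^{k+1}(n-1)c_1)\Lambda\big]_y=0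 .$$
   Context: The Poisson bracket is $\{H,F\}=\sum_{j=1}^2\left(\frac{\partial H}{\partial q^j}\frac{\partial F}{\partial p_j}-\frac{\partial H}{\partial p_j}\frac{\partial F}{\partial q^j}\right)$ with $(q^1,q^2)=(x,y)$. The condition $\{H,F\}=0$ says that $F$ is a first integral (polynomial of degree $n$ in momenta) of the geodesic flow of the metric $\Lambda(x,y)(dx^2+dy^2)$. Subscripts $x,y$ denote partial derivatives. *)

theory Defs
  imports "HOL-Analysis.Analysis"
begin

definition pdx :: "(real \<Rightarrow> real \<Rightarrow> real) \<Rightarrow> real \<Rightarrow> real \<Rightarrow> real" where
  "pdx f x y = deriv (\<lambda>t. f t y) x"

definition pdy :: "(real \<Rightarrow> real \<Rightarrow> real) \<Rightarrow> real \<Rightarrow> real \<Rightarrow> real" where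
  "pdy f x y = deriv (\<lambda>t. f x t) y"

fun iter_pd :: "bool list \<Rightarrow> (real \<Rightarrow> real \<Rightarrow> real) \<Rightarrow> real \<Rightarrow> real \<Rightarrow> real" where
  "iter_pd [] f = f"
| "iter_pd (b # bs) f = (if b then pdx else pdy) (iter_pd bs f)"

definition smooth_on :: "(real \<times> real) set \<Rightarrow> (real \<Rightarrow> real \<Rightarrow> real) \<Rightarrow> bool" where
  "smooth_on \<Omega> f \<longleftrightarrow> (\<forall>bs. (\<lambda>(x, y). iter_pd bs f x y) differentiable_on \<Omega>)"

definition poisson ::
  "(real \<Rightarrow> real \<Rightarrow> real \<Rightarrow> real \<Rightarrow> real) \<Rightarrow> (real \<Rightarrow> real \<Rightarrow> real \<Rightarrow> real \<Rightarrow> real)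
   \<Rightarrow> real \<Rightarrow> real \<Rightarrow> real \<Rightarrow> real \<Rightarrow> real" where
  "poisson H F x y p1 p2 =
     deriv (\<lambda>t. H t y p1 p2) x * deriv (\<lambda>t. F x y t p2) p1
   - deriv (\<lambda>t. H x y t p2) p1 * deriv (\<lambda>t. F t y p1 p2) x
   + deriv (\<lambda>t. H x t p1 p2) y * deriv (\<lambda>t. F x y p1 t) p2
   - deriv (\<lambda>t. H x y p1 t) p2 * deriv (\<lambda>t. F x t p1 p2) y"

end

theory Submission
  imports Defs "HOL-Computational_Algebra.Polynomial"
begin



lemma pderiv_sum: "pderiv (sum f A) = (\<Sum>x\<in>A. pderiv (f x))"
  by (induct A rule: infinite_finite_induct) (auto simp: pderiv_add)

lemma poly_cp: "poly (\<Sum>m=0..n. monom (c m) m) (z::complex) = (\<Sum>m=0..n. c m * z^m)"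
  by (simp add: poly_sum poly_monom)

lemma poly_pderiv_cp: "poly (pderiv (\<Sum>m=0..n. monom (c m) m)) (z::complex) = (\<Sum>m=0..n. of_nat m * c m * z^(m-1))"
  by (simp add: pderiv_sum pderiv_monom poly_sum poly_monom)

lemma euler: "(z::complex) * poly (pderiv (\<Sum>m=0..n. monom (c m) m)) z = (\<Sum>m=0..n. of_nat m * c m * z^m)"
  unfolding poly_pderiv_cp sum_distrib_left
  apply (rule sum.cong, simp)
  subgoal for m by (cases m) (auto simp: algebra_simps)
  done

lemma core:
  fixes a ax ay :: "nat \<Rightarrow> real" and L Lx Ly :: real and n :: nat
  assumes L: "L \<noteq> 0"
  and R: "\<And>s::real. (1+s^2)*(Lx*(\<Sum>m=0..n. real(n-m)*a m * s^m) + Ly*(\<Sum>m=0..n. a m*(real m * s^(m-1))))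
             + 2*L*((\<Sum>m=0..n. ax m * s^m) + s*(\<Sum>m=0..n. ay m * s^m)) = 0"
  defines "S \<equiv> \<lambda>c::nat\<Rightarrow>real. (\<Sum>m=0..n. complex_of_real (c m) * \<i>^m)"
  shows "of_real Lx * S (\<lambda>m. real(n-m)*a m) + \<i> * of_real Ly * (S (\<lambda>m. real(n-m)*a m) - of_nat n * S a)
      + of_real L * (S (\<lambda>m. real(n-m)*ax m) - of_nat n * S ax)
      + \<i> * of_real L * (S (\<lambda>m. real(n-m)*ay m) - of_nat n * S ay) - \<i> * of_real L * S ay = 0"
proof -
  define cp where "cp = (\<lambda>c::nat\<Rightarrow>real. (\<Sum>m=0..n. monom (complex_of_real (c m)) m))"
  define P where "P = [:1,0,1:] * (smult (of_real Lx) (cp (\<lambda>m. real(n-m)*a m)) + smult (of_real Ly) (pderiv (cp a)))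
     + smult (of_real (2*L)) (cp ax + [:0,1:] * cp ay)"
  have "poly P (of_real s) = 0" for s
  proof -
    have "poly P (of_real s) = of_real ((1+s^2)*(Lx*(\<Sum>m=0..n. real(n-m)*a m * s^m) + Ly*(\<Sum>m=0..n. a m*(real m * s^(m-1))))
             + 2*L*((\<Sum>m=0..n. ax m * s^m) + s*(\<Sum>m=0..n. ay m * s^m)))"
      by (simp add: P_def cp_def poly_cp poly_pderiv_cp algebra_simps power2_eq_square)
    then show ?thesis by (simp only: R of_real_0)
  qed
  then have "P = 0"
  proof -
    have "range (of_real :: real \<Rightarrow> complex) \<subseteq> {z. poly P z = 0}" using \<open>\<And>s. poly P (of_real s) = 0\<close> by auto
    moreover have "infinite (range (of_real :: real \<Rightarrow> complex))"
      using finite_imageD[of "of_real :: real \<Rightarrow> complex" UNIV] inj_of_real infinite_UNIV_char_0 by auto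
    ultimately show ?thesis using poly_roots_finite[of P] finite_subset by blast
  qed
  then have "poly (pderiv P) \<i> = 0" by simp
  then have E: "2*\<i>*(of_real Lx * poly (cp (\<lambda>m. real(n-m)*a m)) \<i> + of_real Ly * poly (pderiv (cp a)) \<i>)
     + 2 * of_real L * (poly (pderiv (cp ax)) \<i> + poly (cp ay) \<i> + \<i> * poly (pderiv (cp ay)) \<i>) = 0"
    by (simp add: P_def pderiv_mult pderiv_add pderiv_smult pderiv_pCons algebra_simps)
  have Mx: "\<i> * poly (pderiv (cp c)) \<i> = of_nat n * S c - S (\<lambda>m. real(n-m)*c m)" for c
  proof -
    have "\<i> * poly (pderiv (cp c)) \<i> = (\<Sum>m=0..n. of_nat m * complex_of_real (c m) * \<i>^m)"
      unfolding cp_def by (rule euler)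
    also have "\<dots> = (\<Sum>m=0..n. of_nat n * (complex_of_real (c m) * \<i>^m) - complex_of_real (real(n-m)*c m) * \<i>^m)"
      by (rule sum.cong) (auto simp: of_nat_diff algebra_simps)
    also have "\<dots> = of_nat n * S c - S (\<lambda>m. real(n-m)*c m)"
      by (simp add: S_def sum_subtractf sum_distrib_left)
    finally show ?thesis .
  qed
  have Sc: "poly (cp c) \<i> = S c" for c unfolding cp_def S_def by (rule poly_cp)
  have ii: "\<i> * (\<i> * z) = - z" for z :: complex by (simp add: mult.assoc[symmetric])
  have pa: "poly (pderiv (cp c)) \<i> = - \<i> * (of_nat n * S c - S (\<lambda>m. real(n-m)*c m))" for c
    using Mx[of c] ii[of "poly (pderiv (cp c)) \<i>"] by (metis mult_minus_left minus_minus mult.assoc)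
  note E = E[unfolded Sc pa]
  have "-(\<i>/2) * (2*\<i>*(of_real Lx * S (\<lambda>m. real(n-m)*a m) + of_real Ly * (- \<i> * (of_nat n * S a - S (\<lambda>m. real(n-m)*a m))))
     + 2 * of_real L * (- \<i> * (of_nat n * S ax - S (\<lambda>m. real(n-m)*ax m)) + S ay + \<i> * (- \<i> * (of_nat n * S ay - S (\<lambda>m. real(n-m)*ay m))))) = 0"
    using E by simp
  then show ?thesis by (simp add: algebra_simps)
qed


lemma alg1:
  fixes l s Lx Ly A B C D :: real
  assumes "(-(1+s^2)*Lx/(2*l^2))*A - (1/l)*B + (-(1+s^2)*Ly/(2*l^2))*C - (s/l)*D = 0" "l \<noteq> 0"
  shows "(1+s^2)*(Lx*A + Ly*C) + 2*l*(B + s*D) = 0"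
proof -
  have "(1+s^2)*(Lx*A + Ly*C) + 2*l*(B + s*D) = (-2*l^2) * ((-(1+s^2)*Lx/(2*l^2))*A - (1/l)*B + (-(1+s^2)*Ly/(2*l^2))*C - (s/l)*D)"
    using assms(2) by (simp add: field_simps power2_eq_square)
  then show ?thesis using assms(1) by simp
qed

lemma pb_to_R:
  fixes a :: "nat \<Rightarrow> real \<Rightarrow> real \<Rightarrow> real" and ax ay :: "nat \<Rightarrow> real"
  assumes L: "\<Lambda> x y > 0"
  and hLx: "((\<lambda>t. \<Lambda> t y) has_real_derivative Lx) (at x)"
  and hLy: "((\<lambda>t. \<Lambda> x t) has_real_derivative Ly) (at y)"
  and hax: "\<And>m. m \<le> n \<Longrightarrow> ((\<lambda>t. a m t y) has_real_derivative ax m) (at x)"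
  and hay: "\<And>m. m \<le> n \<Longrightarrow> ((\<lambda>t. a m x t) has_real_derivative ay m) (at y)"
  and PB: "poisson (\<lambda>x y p1 p2. (p1\<^sup>2 + p2\<^sup>2) / (2 * \<Lambda> x y))
              (\<lambda>x y p1 p2. \<Sum>i = 0..n. a i x y * p1 ^ (n - i) * p2 ^ i) x y 1 s = 0"
  shows "(1+s^2)*(Lx*(\<Sum>m=0..n. real(n-m)*a m x y * s^m) + Ly*(\<Sum>m=0..n. a m x y*(real m * s^(m-1))))
             + 2*\<Lambda> x y*((\<Sum>m=0..n. ax m * s^m) + s*(\<Sum>m=0..n. ay m * s^m)) = 0"
proof -
  define l where "l = \<Lambda> x y"
  have l0: "l \<noteq> 0" using L l_def by simp
  have d1: "((\<lambda>t. (1\<^sup>2+s\<^sup>2)/(2*\<Lambda> t y)) has_real_derivative (-(1+s^2)*Lx/(2*l^2))) (at x)"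
    apply (rule derivative_eq_intros refl hLx)+
    using l0 by (auto simp: l_def field_simps power2_eq_square)
  have d2: "((\<lambda>t. (1\<^sup>2+s\<^sup>2)/(2*\<Lambda> x t)) has_real_derivative (-(1+s^2)*Ly/(2*l^2))) (at y)"
    apply (rule derivative_eq_intros refl hLy)+
    using l0 by (auto simp: l_def field_simps power2_eq_square)
  have d3: "((\<lambda>t. (t\<^sup>2+s\<^sup>2)/(2*\<Lambda> x y)) has_real_derivative (1/l)) (at 1)"
    apply (rule derivative_eq_intros refl)+
    using l0 by (auto simp: l_def field_simps power2_eq_square)
  have d4: "((\<lambda>t. (1\<^sup>2+t\<^sup>2)/(2*\<Lambda> x y)) has_real_derivative (s/l)) (at s)"
    apply (rule derivative_eq_intros refl)+
    using l0 by (auto simp: l_def field_simps power2_eq_square)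
  have d5: "((\<lambda>t. \<Sum>i = 0..n. a i t y * 1 ^ (n - i) * s ^ i) has_real_derivative (\<Sum>m=0..n. ax m * s^m)) (at x)"
    by (rule DERIV_sum) (auto intro!: derivative_eq_intros hax)
  have d6: "((\<lambda>t. \<Sum>i = 0..n. a i x t * 1 ^ (n - i) * s ^ i) has_real_derivative (\<Sum>m=0..n. ay m * s^m)) (at y)"
    by (rule DERIV_sum) (auto intro!: derivative_eq_intros hay)
  have d7: "((\<lambda>t. \<Sum>i = 0..n. a i x y * t ^ (n - i) * s ^ i) has_real_derivative (\<Sum>m=0..n. real(n-m)*a m x y * s^m)) (at 1)"
    by (rule DERIV_sum) (auto intro!: derivative_eq_intros)
  have d8: "((\<lambda>t. \<Sum>i = 0..n. a i x y * 1 ^ (n - i) * t ^ i) has_real_derivative (\<Sum>m=0..n. a m x y*(real m * s^(m-1)))) (at s)"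
    by (rule DERIV_sum) (auto intro!: derivative_eq_intros)
  have "(-(1+s^2)*Lx/(2*l^2)) * (\<Sum>m=0..n. real(n-m)*a m x y * s^m) - (1/l) * (\<Sum>m=0..n. ax m * s^m)
      + (-(1+s^2)*Ly/(2*l^2)) * (\<Sum>m=0..n. a m x y*(real m * s^(m-1))) - (s/l) * (\<Sum>m=0..n. ay m * s^m) = 0"
    using PB unfolding poisson_def
    by (simp only: DERIV_imp_deriv[OF d1] DERIV_imp_deriv[OF d2] DERIV_imp_deriv[OF d3] DERIV_imp_deriv[OF d4]
       DERIV_imp_deriv[OF d5] DERIV_imp_deriv[OF d6] DERIV_imp_deriv[OF d7] DERIV_imp_deriv[OF d8])
  then show ?thesis using l0 unfolding l_def[symmetric] by (rule alg1)
qed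


lemma partials:
  assumes "smooth_on \<Omega> f" "open \<Omega>" "(x,y) \<in> \<Omega>"
  shows "((\<lambda>t. f t y) has_real_derivative pdx f x y) (at x)"
    and "((\<lambda>t. f x t) has_real_derivative pdy f x y) (at y)"
proof -
  have "(\<lambda>(x, y). iter_pd [] f x y) differentiable_on \<Omega>" using assms(1) unfolding smooth_on_def by blast
  then have "(\<lambda>(x, y). f x y) differentiable_on \<Omega>" by simp
  then have "(\<lambda>(x, y). f x y) differentiable (at (x,y) within \<Omega>)"
    using assms(3) unfolding differentiable_on_def by blast
  then have d: "(\<lambda>(x, y). f x y) differentiable (at (x,y))"
    using at_within_open[OF assms(3,2)] by simp
  have "(\<lambda>t. (t,y)) differentiable (at x)" by (auto intro!: derivative_intros)
  then have "((\<lambda>(x, y). f x y) \<circ> (\<lambda>t. (t,y))) differentiable (at x)"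
    using d by (intro differentiable_chain_at) auto
  then have "(\<lambda>t. f t y) differentiable (at x)" by (simp add: o_def)
  then show "((\<lambda>t. f t y) has_real_derivative pdx f x y) (at x)"
    unfolding pdx_def by (simp add: DERIV_deriv_iff_real_differentiable)
  have "(\<lambda>t. (x,t)) differentiable (at y)" by (auto intro!: derivative_intros)
  then have "((\<lambda>(x, y). f x y) \<circ> (\<lambda>t. (x,t))) differentiable (at y)"
    using d by (intro differentiable_chain_at) auto
  then have "(\<lambda>t. f x t) differentiable (at y)" by (simp add: o_def)
  then show "((\<lambda>t. f x t) has_real_derivative pdy f x y) (at y)"
    unfolding pdy_def by (simp add: DERIV_deriv_iff_real_differentiable)
qed

lemma ipow_even: "\<i> ^ (2*j) = (-1::complex)^j"
  by (simp add: power_mult)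

lemma split_i: "(\<Sum>m<2*N. complex_of_real (c m) * \<i>^m)
   = (\<Sum>j<N. complex_of_real ((-1)^j * c(2*j)) + \<i> * complex_of_real ((-1)^j * c(2*j+1)))"
proof (induction N)
  case 0 then show ?case by simp
next
  case (Suc N)
  have e: "2 * Suc N = Suc (Suc (2*N))" by simp
  show ?case unfolding e sum.lessThan_Suc Suc.IH[symmetric]
    by (simp add: ipow_even algebra_simps)
qed

lemma par_odd:
  assumes "n = 2*k+1"
  shows "Re (\<Sum>m=0..n. complex_of_real (c m) * \<i>^m) = (\<Sum>j<k+1. (-1)^j * c(2*j))"
    and "Im (\<Sum>m=0..n. complex_of_real (c m) * \<i>^m) = (\<Sum>j<k+1. (-1)^j * c(2*j+1))"
proof -
  have "{0..n} = {..<2*(k+1)}" using assms by auto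
  then have e: "(\<Sum>m=0..n. complex_of_real (c m) * \<i>^m) = (\<Sum>j<k+1. complex_of_real ((-1)^j * c(2*j)) + \<i> * complex_of_real ((-1)^j * c(2*j+1)))"
    using split_i by metis
  show "Re (\<Sum>m=0..n. complex_of_real (c m) * \<i>^m) = (\<Sum>j<k+1. (-1)^j * c(2*j))"
    unfolding e by (simp add: Re_sum)
  show "Im (\<Sum>m=0..n. complex_of_real (c m) * \<i>^m) = (\<Sum>j<k+1. (-1)^j * c(2*j+1))"
    unfolding e by (simp add: Im_sum)
qed

lemma par_even:
  assumes "n = 2*k"
  shows "Re (\<Sum>m=0..n. complex_of_real (c m) * \<i>^m) = (\<Sum>j<k+1. (-1)^j * c(2*j))"
    and "Im (\<Sum>m=0..n. complex_of_real (c m) * \<i>^m) = (\<Sum>j<k. (-1)^j * c(2*j+1))"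
proof -
  have "{0..n} = {..<Suc (2*k)}" using assms by auto
  then have e: "(\<Sum>m=0..n. complex_of_real (c m) * \<i>^m) = (\<Sum>j<k. complex_of_real ((-1)^j * c(2*j)) + \<i> * complex_of_real ((-1)^j * c(2*j+1)))
     + complex_of_real ((-1)^k * c(2*k))"
    using split_i by (simp add: ipow_even)
  show "Re (\<Sum>m=0..n. complex_of_real (c m) * \<i>^m) = (\<Sum>j<k+1. (-1)^j * c(2*j))"
    unfolding e by (simp add: Re_sum)
  show "Im (\<Sum>m=0..n. complex_of_real (c m) * \<i>^m) = (\<Sum>j<k. (-1)^j * c(2*j+1))"
    unfolding e by (simp add: Im_sum)
qed


lemma altsum:
  fixes f :: "nat \<Rightarrow> real"
  assumes "f N = c + (\<Sum>j<N. (-1)^j * f (N-1-j))"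
  shows "(\<Sum>j<N+1. (-1)^j * f j) = (-1)^N * c"
proof -
  have r: "(\<Sum>j<N. (-1)^j * f (N-1-j)) = (\<Sum>j<N. (-1)^(N-1-j) * f j)"
  proof -
    have "(\<Sum>j<N. (-1)^j * f (N-1-j)) = (\<Sum>i<N. (\<lambda>j. (-1)^(N-1-j) * f j) (N - Suc i))"
    proof (rule sum.cong)
      fix i assume "i \<in> {..<N}"
      then have "N-1-(N - Suc i) = i" "N - Suc i = N-1-i" by auto
      then show "(-1)^i * f (N-1-i) = (\<lambda>j. (-1)^(N-1-j) * f j) (N - Suc i)" by (simp only:)
    qed simp
    also have "\<dots> = (\<Sum>j<N. (-1)^(N-1-j) * f j)" by (rule sum.nat_diff_reindex)
    finally show ?thesis .
  qed
  have s: "(-1::real)^N * (-1)^(N-1-j) = - ((-1)^j)" if "j < N" for j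
  proof -
    obtain d where "N = Suc (j + d)" using less_imp_Suc_add[OF \<open>j<N\<close>] by blast
    then show ?thesis by (simp add: power_add)
  qed
  have "(\<Sum>j<N+1. (-1)^j * f j) = (\<Sum>j<N. (-1)^j * f j) + (-1)^N * f N" by simp
  also have "(-1)^N * f N = (-1)^N * c + (\<Sum>j<N. ((-1)^N * (-1)^(N-1-j)) * f j)"
    by (subst assms, simp only: r) (simp add: sum_distrib_left distrib_left mult.assoc)
  also have "(\<Sum>j<N. ((-1)^N * (-1)^(N-1-j)) * f j) = - (\<Sum>j<N. (-1)^j * f j)"
    unfolding sum_negf[symmetric] by (rule sum.cong) (use s in auto)
  finally show ?thesis by simp
qed



lemma upto_pred: "k \<ge> 1 \<Longrightarrow> {0..k-1} = {..<k::nat}" by auto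

lemma e1:
  assumes "n = 2*k" "k \<ge> 1"
  shows "Re (\<Sum>m=0..n. complex_of_real (real(n-m)*c m) * \<i>^m) = (\<Sum>j=0..k-1. (-1)^j * real(n-2*j) * c(2*j))"
proof -
  have "Re (\<Sum>m=0..n. complex_of_real (real(n-m)*c m) * \<i>^m) = (\<Sum>j<k+1. (-1)^j * (real(n-2*j)*c(2*j)))"
    by (rule par_even(1)[OF assms(1)])
  also have "\<dots> = (\<Sum>j<k. (-1)^j * (real(n-2*j)*c(2*j)))" using assms(1) by simp
  finally show ?thesis using upto_pred[OF assms(2)] by (simp add: mult.assoc)
qed

lemma e2:
  assumes "n = 2*k" "k \<ge> 2"
  shows "Im (\<Sum>m=0..n. complex_of_real (real(n-m)*c m) * \<i>^m) = (\<Sum>j=0..k-2. (-1)^j * real(n-2-2*j) * c(2*j+1))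
     + Im (\<Sum>m=0..n. complex_of_real (c m) * \<i>^m)"
proof -
  have "Im (\<Sum>m=0..n. complex_of_real (real(n-m)*c m) * \<i>^m) = (\<Sum>j<k. (-1)^j * (real(n-(2*j+1))*c(2*j+1)))"
    by (rule par_even(2)[OF assms(1)])
  also have "\<dots> = (\<Sum>j<k. (-1)^j * real(n-2-2*j) * c(2*j+1) + (-1)^j * c(2*j+1))"
  proof (rule sum.cong)
    fix j assume "j \<in> {..<k}"
    then have "n-(2*j+1) = Suc (n-2-2*j)" using assms by auto
    then have "real (n-(2*j+1)) = real (n-2-2*j) + 1" by simp
    then show "(-1)^j * (real(n-(2*j+1))*c(2*j+1)) = (-1)^j * real(n-2-2*j) * c(2*j+1) + (-1)^j * c(2*j+1)"
      by (simp only: distrib_right distrib_left mult_1 mult.assoc)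
  qed simp
  also have "\<dots> = (\<Sum>j<k. (-1)^j * real(n-2-2*j) * c(2*j+1)) + (\<Sum>j<k. (-1)^j * c(2*j+1))"
    by (simp add: sum.distrib)
  also have "(\<Sum>j<k. (-1)^j * c(2*j+1)) = Im (\<Sum>m=0..n. complex_of_real (c m) * \<i>^m)"
    by (rule par_even(2)[OF assms(1), symmetric])
  also have "(\<Sum>j<k. (-1)^j * real(n-2-2*j) * c(2*j+1)) = (\<Sum>j<k-1. (-1)^j * real(n-2-2*j) * c(2*j+1))"
  proof -
    obtain k' where k': "k = Suc k'" using assms by (cases k) auto
    have "n-2-2*k' = 0" using assms k' by simp
    then show ?thesis using k' by simp
  qed
  also have "{..<k-1} = {0..k-2}" using assms by auto
  finally show ?thesis .
qed

lemma o1: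
  assumes "n = 2*k+1" "k \<ge> 1"
  shows "Re (\<Sum>m=0..n. complex_of_real (real(n-m)*c m) * \<i>^m) = (\<Sum>j=0..k-1. (-1)^j * real(n-1-2*j) * c(2*j))
     + Re (\<Sum>m=0..n. complex_of_real (c m) * \<i>^m)"
proof -
  have "Re (\<Sum>m=0..n. complex_of_real (real(n-m)*c m) * \<i>^m) = (\<Sum>j<k+1. (-1)^j * (real(n-2*j)*c(2*j)))"
    by (rule par_odd(1)[OF assms(1)])
  also have "\<dots> = (\<Sum>j<k+1. (-1)^j * real(n-1-2*j) * c(2*j) + (-1)^j * c(2*j))"
  proof (rule sum.cong)
    fix j assume "j \<in> {..<k+1}"
    then have "n-2*j = Suc (n-1-2*j)" using assms by auto
    then have "real (n-2*j) = real (n-1-2*j) + 1" by simp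
    then show "(-1)^j * (real(n-2*j)*c(2*j)) = (-1)^j * real(n-1-2*j) * c(2*j) + (-1)^j * c(2*j)"
      by (simp only: distrib_right distrib_left mult_1 mult.assoc)
  qed simp
  also have "\<dots> = (\<Sum>j<k+1. (-1)^j * real(n-1-2*j) * c(2*j)) + (\<Sum>j<k+1. (-1)^j * c(2*j))"
    by (simp add: sum.distrib)
  also have "(\<Sum>j<k+1. (-1)^j * c(2*j)) = Re (\<Sum>m=0..n. complex_of_real (c m) * \<i>^m)"
    by (rule par_odd(1)[OF assms(1), symmetric])
  also have "(\<Sum>j<k+1. (-1)^j * real(n-1-2*j) * c(2*j)) = (\<Sum>j<k. (-1)^j * real(n-1-2*j) * c(2*j))"
    using assms(1) by simp
  also have "{..<k} = {0..k-1}" using assms by auto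
  finally show ?thesis .
qed

lemma o2:
  assumes "n = 2*k+1" "k \<ge> 1"
  shows "Im (\<Sum>m=0..n. complex_of_real (real(n-m)*c m) * \<i>^m) = (\<Sum>j=0..k-1. (-1)^j * real(n-1-2*j) * c(2*j+1))"
proof -
  have "Im (\<Sum>m=0..n. complex_of_real (real(n-m)*c m) * \<i>^m) = (\<Sum>j<k+1. (-1)^j * (real(n-(2*j+1))*c(2*j+1)))"
    by (rule par_odd(2)[OF assms(1)])
  also have "\<dots> = (\<Sum>j<k. (-1)^j * (real(n-(2*j+1))*c(2*j+1)))" using assms(1) by simp
  also have "\<dots> = (\<Sum>j<k. (-1)^j * real(n-1-2*j) * c(2*j+1))"
    by (rule sum.cong) (auto simp: algebra_simps)
  finally show ?thesis using upto_pred[OF assms(2)] by simp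
qed




lemma dsum:
  assumes "\<And>j. j\<in>J \<Longrightarrow> ((F j) has_real_derivative F' j) (at x)"
  shows "((\<lambda>t. \<Sum>j\<in>J. w j * F j t) has_real_derivative (\<Sum>j\<in>J. w j * F' j)) (at x)"
  by (rule DERIV_sum) (auto intro!: DERIV_cmult assms)

lemma const_deriv:
  fixes g :: "real \<Rightarrow> real \<Rightarrow> real"
  assumes op: "open \<Omega>" and xy: "(x,y)\<in>\<Omega>" and c: "\<And>u v. (u,v)\<in>\<Omega> \<Longrightarrow> g u v = c"
    and dx: "((\<lambda>t. g t y) has_real_derivative gx) (at x)"
    and dy: "((\<lambda>t. g x t) has_real_derivative gy) (at y)"
  shows "gx = 0" "gy = 0"
proof -
  have o1: "open ((\<lambda>t. (t,y)) -` \<Omega>)"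
    by (rule continuous_open_vimage) (auto intro!: continuous_intros op)
  have "((\<lambda>t. g t y) has_real_derivative 0) (at x)"
    by (rule has_field_derivative_transform_within_open[OF DERIV_const o1]) (use xy c in auto)
  then show "gx = 0" using dx DERIV_unique by blast
  have o2: "open ((\<lambda>t. (x,t)) -` \<Omega>)"
    by (rule continuous_open_vimage) (auto intro!: continuous_intros op)
  have "((\<lambda>t. g x t) has_real_derivative 0) (at y)"
    by (rule has_field_derivative_transform_within_open[OF DERIV_const o2]) (use xy c in auto)
  then show "gy = 0" using dy DERIV_unique by blast
qed

lemma altC:
  fixes f h :: "nat \<Rightarrow> real"
  assumes "f N = c + (\<Sum>j\<in>{j. 2*j \<le> M}. (-1)^j * h j)" "{j. 2*j \<le> M} = {..<N}" "\<And>j. j<N \<Longrightarrow> h j = f (N-1-j)"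
  shows "(\<Sum>j<N+1. (-1)^j * f j) = (-1)^N * c"
proof (rule altsum)
  show "f N = c + (\<Sum>j<N. (-1)^j * f (N-1-j))" using assms by simp
qed

lemma ReIm_Z:
  fixes L Lx Ly :: real and D A Dx Ax Dy Ay :: complex
  assumes "of_real Lx * D + \<i> * of_real Ly * (D - of_nat n * A) + of_real L * (Dx - of_nat n * Ax) + \<i> * of_real L * (Dy - of_nat n * Ay) - \<i> * of_real L * Ay = 0"
  shows "Lx * Re D - Ly * (Im D - n * Im A) + L * (Re Dx - n * Re Ax) - L * (Im Dy - n * Im Ay) + L * Im Ay = 0"
    and "Lx * Im D + Ly * (Re D - n * Re A) + L * (Im Dx - n*Im Ax) + L*(Re Dy - n * Re Ay) - L * Re Ay = 0"
proof -
  have "Re (of_real Lx * D + \<i> * of_real Ly * (D - of_nat n * A) + of_real L * (Dx - of_nat n * Ax) + \<i> * of_real L * (Dy - of_nat n * Ay) - \<i> * of_real L * Ay) = 0"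
    "Im (of_real Lx * D + \<i> * of_real Ly * (D - of_nat n * A) + of_real L * (Dx - of_nat n * Ax) + \<i> * of_real L * (Dy - of_nat n * Ay) - \<i> * of_real L * Ay) = 0"
    using assms by simp_all
  then show "Lx * Re D - Ly * (Im D - n * Im A) + L * (Re Dx - n * Re Ax) - L * (Im Dy - n * Im Ay) + L * Im Ay = 0"
    and "Lx * Im D + Ly * (Re D - n * Re A) + L * (Im Dx - n*Im Ax) + L*(Re Dy - n * Re Ay) - L * Re Ay = 0"
    by (simp_all add: algebra_simps)
qed

theorem lemma1:
  fixes n :: nat and \<Omega> :: "(real \<times> real) set"
    and \<Lambda> :: "real \<Rightarrow> real \<Rightarrow> real" and a :: "nat \<Rightarrow> real \<Rightarrow> real \<Rightarrow> real"
    and c1 c2 :: real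
  assumes n3: "n \<ge> 3"
    and op: "open \<Omega>"
    and Lpos: "\<forall>(x, y) \<in> \<Omega>. \<Lambda> x y > 0"
    and Lsm: "smooth_on \<Omega> \<Lambda>"
    and asm: "\<forall>i \<le> n. smooth_on \<Omega> (a i)"
    and PB: "\<forall>(x, y) \<in> \<Omega>. \<forall>p1 p2.
      poisson (\<lambda>x y p1 p2. (p1\<^sup>2 + p2\<^sup>2) / (2 * \<Lambda> x y))
              (\<lambda>x y p1 p2. \<Sum>i = 0..n. a i x y * p1 ^ (n - i) * p2 ^ i) x y p1 p2 = 0"
    and C1: "\<forall>(x, y) \<in> \<Omega>. a (n - 1) x y = c1 + (\<Sum>j \<in> {j. 2 * j \<le> n - 3}. (-1) ^ j * a (n - 3 - 2 * j) x y)"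
    and C2: "\<forall>(x, y) \<in> \<Omega>. a n x y = c2 + (\<Sum>j \<in> {j. 2 * j \<le> n - 2}. (-1) ^ j * a (n - 2 - 2 * j) x y)"
  shows "(\<forall>k. n = 2 * k \<longrightarrow>
          (let Se = (\<lambda>x y. \<Sum>j = 0..k - 1. (-1) ^ j * real (n - 2 * j) * a (2 * j) x y);
               So = (\<lambda>x y. \<Sum>j = 0..k - 2. (-1) ^ j * real (n - 2 - 2 * j) * a (2 * j + 1) x y)
           in \<forall>(x, y) \<in> \<Omega>.
              pdx (\<lambda>x y. Se x y * \<Lambda> x y) x y
              + pdy (\<lambda>x y. (- So x y + (-1) ^ (k + 1) * real (n - 1) * c1) * \<Lambda> x y) x y = 0
            \<and> pdx (\<lambda>x y. (So x y + (-1) ^ (k + 1) * c1) * \<Lambda> x y) x y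
              + pdy (\<lambda>x y. (Se x y + (-1) ^ (k + 1) * real n * c2) * \<Lambda> x y) x y = 0))
    \<and> (\<forall>k. n = 2 * k + 1 \<longrightarrow>
          (let Te = (\<lambda>x y. \<Sum>j = 0..k - 1. (-1) ^ j * real (n - 1 - 2 * j) * a (2 * j) x y);
               To = (\<lambda>x y. \<Sum>j = 0..k - 1. (-1) ^ j * real (n - 1 - 2 * j) * a (2 * j + 1) x y)
           in \<forall>(x, y) \<in> \<Omega>.
              pdx (\<lambda>x y. (Te x y + (-1) ^ k * c1) * \<Lambda> x y) x y
              + pdy (\<lambda>x y. (- To x y + (-1) ^ k * real n * c2) * \<Lambda> x y) x y = 0
            \<and> pdx (\<lambda>x y. To x y * \<Lambda> x y) x y
              + pdy (\<lambda>x y. (Te x y + (-1) ^ (k + 1) * real (n - 1) * c1) * \<Lambda> x y) x y = 0))"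
proof -
  have Lne: "\<Lambda> x y \<noteq> 0" if "(x,y)\<in>\<Omega>" for x y using Lpos that by auto
  have dLx: "((\<lambda>t. \<Lambda> t y) has_real_derivative pdx \<Lambda> x y) (at x)" if "(x,y)\<in>\<Omega>" for x y
    using partials(1)[OF Lsm op that] .
  have dLy: "((\<lambda>t. \<Lambda> x t) has_real_derivative pdy \<Lambda> x y) (at y)" if "(x,y)\<in>\<Omega>" for x y
    using partials(2)[OF Lsm op that] .
  have dax: "((\<lambda>t. a m t y) has_real_derivative pdx (a m) x y) (at x)" if "m \<le> n" "(x,y)\<in>\<Omega>" for m x y
    using partials(1)[OF asm[rule_format, OF that(1)] op that(2)] .
  have day: "((\<lambda>t. a m x t) has_real_derivative pdy (a m) x y) (at y)" if "m \<le> n" "(x,y)\<in>\<Omega>" for m x y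
    using partials(2)[OF asm[rule_format, OF that(1)] op that(2)] .
  define S where "S = (\<lambda>c::nat\<Rightarrow>real. (\<Sum>m=0..n. complex_of_real (c m) * \<i>^m))"
  have Z: "of_real (pdx \<Lambda> x y) * S (\<lambda>m. real(n-m)*a m x y)
      + \<i> * of_real (pdy \<Lambda> x y) * (S (\<lambda>m. real(n-m)*a m x y) - of_nat n * S (\<lambda>m. a m x y))
      + of_real (\<Lambda> x y) * (S (\<lambda>m. real(n-m)*pdx (a m) x y) - of_nat n * S (\<lambda>m. pdx (a m) x y))
      + \<i> * of_real (\<Lambda> x y) * (S (\<lambda>m. real(n-m)*pdy (a m) x y) - of_nat n * S (\<lambda>m. pdy (a m) x y))
      - \<i> * of_real (\<Lambda> x y) * S (\<lambda>m. pdy (a m) x y) = 0" if xy: "(x,y)\<in>\<Omega>" for x y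
    unfolding S_def
  proof (rule core[where a="\<lambda>m. a m x y" and ax="\<lambda>m. pdx (a m) x y" and ay="\<lambda>m. pdy (a m) x y"])
    show "\<Lambda> x y \<noteq> 0" using Lne xy .
    fix s
    show "(1+s^2)*(pdx \<Lambda> x y*(\<Sum>m=0..n. real(n-m)*a m x y * s^m) + pdy \<Lambda> x y*(\<Sum>m=0..n. a m x y*(real m * s^(m-1))))
             + 2*\<Lambda> x y*((\<Sum>m=0..n. pdx (a m) x y * s^m) + s*(\<Sum>m=0..n. pdy (a m) x y * s^m)) = 0"
      apply (rule pb_to_R[where \<Lambda>=\<Lambda> and x=x and y=y and a=a and n=n and s=s])
      using Lpos xy dLx[OF xy] dLy[OF xy] dax[OF _ xy] day[OF _ xy] PB by auto
  qed
  show ?thesis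
  proof (intro conjI allI impI)
    fix k assume nk: "n = 2*k"
    have k2: "k \<ge> 2" using n3 nk by simp
    have CE: "(\<Sum>j<k+1. (-1)^j * a (2*j) u v) = (-1)^k * c2" if uv: "(u,v)\<in>\<Omega>" for u v
    proof (rule altC[where M="n-2" and h="\<lambda>j. a (n-2-2*j) u v"])
      show "a (2*k) u v = c2 + (\<Sum>j\<in>{j. 2*j \<le> n-2}. (-1)^j * a (n-2-2*j) u v)"
        using C2 uv nk by auto
      show "{j. 2*j \<le> n-2} = {..<k}" using nk k2 by auto
      show "a (n-2-2*j) u v = a (2*(k-1-j)) u v" if "j<k" for j
      proof -
        have "n-2-2*j = 2*(k-1-j)" using nk that by auto
        then show ?thesis by simp
      qed
    qed
    have CO: "(\<Sum>j<k. (-1)^j * a (2*j+1) u v) = (-1)^(k-1) * c1" if uv: "(u,v)\<in>\<Omega>" for u v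
    proof -
      have "(\<Sum>j<k-1+1. (-1)^j * a (2*j+1) u v) = (-1)^(k-1) * c1"
      proof (rule altC[where M="n-3" and h="\<lambda>j. a (n-3-2*j) u v"])
        have "n - 1 = 2*(k-1)+1" using nk k2 by auto
        then show "a (2*(k-1)+1) u v = c1 + (\<Sum>j\<in>{j. 2*j \<le> n-3}. (-1)^j * a (n-3-2*j) u v)"
          using C1 uv by auto
        show "{j. 2*j \<le> n-3} = {..<k-1}" using nk k2 by auto
        show "a (n-3-2*j) u v = a (2*(k-1-1-j)+1) u v" if "j<k-1" for j
        proof -
          have "n-3-2*j = 2*(k-1-1-j)+1" using nk that by auto
          then show ?thesis by simp
        qed
      qed
      then show ?thesis using k2 by simp
    qed
    show "let Se = (\<lambda>x y. \<Sum>j = 0..k - 1. (-1) ^ j * real (n - 2 * j) * a (2 * j) x y);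
               So = (\<lambda>x y. \<Sum>j = 0..k - 2. (-1) ^ j * real (n - 2 - 2 * j) * a (2 * j + 1) x y)
           in \<forall>(x, y) \<in> \<Omega>.
              pdx (\<lambda>x y. Se x y * \<Lambda> x y) x y
              + pdy (\<lambda>x y. (- So x y + (-1) ^ (k + 1) * real (n - 1) * c1) * \<Lambda> x y) x y = 0
            \<and> pdx (\<lambda>x y. (So x y + (-1) ^ (k + 1) * c1) * \<Lambda> x y) x y
              + pdy (\<lambda>x y. (Se x y + (-1) ^ (k + 1) * real n * c2) * \<Lambda> x y) x y = 0"
      unfolding Let_def
    proof (intro ballI)
      fix p assume "p \<in> \<Omega>"
      then obtain x y where p: "p = (x,y)" and xy: "(x,y)\<in>\<Omega>" by (cases p) auto
      have gEx: "((\<lambda>t. \<Sum>j<k+1. (-1)^j * a (2*j) t y) has_real_derivative (\<Sum>j<k+1. (-1)^j * pdx (a (2*j)) x y)) (at x)"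
        apply (rule dsum[where F="\<lambda>j t. a (2*j) t y"]) apply (rule dax[OF _ xy]) using nk k2 by auto
      have gEy: "((\<lambda>t. \<Sum>j<k+1. (-1)^j * a (2*j) x t) has_real_derivative (\<Sum>j<k+1. (-1)^j * pdy (a (2*j)) x y)) (at y)"
        apply (rule dsum[where F="\<lambda>j t. a (2*j) x t"]) apply (rule day[OF _ xy]) using nk k2 by auto
      have gOx: "((\<lambda>t. \<Sum>j<k. (-1)^j * a (2*j+1) t y) has_real_derivative (\<Sum>j<k. (-1)^j * pdx (a (2*j+1)) x y)) (at x)"
        apply (rule dsum[where F="\<lambda>j t. a (2*j+1) t y"]) apply (rule dax[OF _ xy]) using nk k2 by auto
      have gOy: "((\<lambda>t. \<Sum>j<k. (-1)^j * a (2*j+1) x t) has_real_derivative (\<Sum>j<k. (-1)^j * pdy (a (2*j+1)) x y)) (at y)"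
        apply (rule dsum[where F="\<lambda>j t. a (2*j+1) x t"]) apply (rule day[OF _ xy]) using nk k2 by auto
      have E0: "(\<Sum>j<k+1. (-1)^j * pdx (a (2*j)) x y) = 0" "(\<Sum>j<k+1. (-1)^j * pdy (a (2*j)) x y) = 0"
        using const_deriv[OF op xy _ gEx gEy, of "(-1)^k * c2"] CE by auto
      have O0: "(\<Sum>j<k. (-1)^j * pdx (a (2*j+1)) x y) = 0" "(\<Sum>j<k. (-1)^j * pdy (a (2*j+1)) x y) = 0"
        using const_deriv[OF op xy _ gOx gOy, of "(-1)^(k-1) * c1"] CO by auto
      have RA: "Re (S (\<lambda>m. pdx (a m) x y)) = 0" "Im (S (\<lambda>m. pdx (a m) x y)) = 0"
               "Re (S (\<lambda>m. pdy (a m) x y)) = 0" "Im (S (\<lambda>m. pdy (a m) x y)) = 0"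
               "Re (S (\<lambda>m. a m x y)) = (-1)^k * c2" "Im (S (\<lambda>m. a m x y)) = (-1)^(k-1) * c1"
        unfolding S_def par_even[OF nk] using E0 O0 CE[OF xy] CO[OF xy] by auto
      have RD: "Re (S (\<lambda>m. real(n-m) * c m)) = (\<Sum>j=0..k-1. (-1)^j * real(n-2*j) * c(2*j))"
        "Im (S (\<lambda>m. real(n-m) * c m)) = (\<Sum>j=0..k-2. (-1)^j * real(n-2-2*j) * c(2*j+1)) + Im (S c)" for c
        unfolding S_def using e1[OF nk] e2[OF nk k2] k2 by auto
      note ZZ = Z[OF xy]
      note ZR = ReIm_Z(1)[OF ZZ, unfolded RD RA]
      note ZI = ReIm_Z(2)[OF ZZ, unfolded RD RA]
      have sEx: "((\<lambda>t. \<Sum>j=0..k-1. (-1)^j*real(n-2*j)*a(2*j) t y) has_real_derivative (\<Sum>j=0..k-1. (-1)^j*real(n-2*j)*pdx (a(2*j)) x y)) (at x)"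
        apply (rule dsum[where F="\<lambda>j t. a (2*j) t y"]) apply (rule dax[OF _ xy]) using nk k2 by auto
      have sEy: "((\<lambda>t. \<Sum>j=0..k-1. (-1)^j*real(n-2*j)*a(2*j) x t) has_real_derivative (\<Sum>j=0..k-1. (-1)^j*real(n-2*j)*pdy (a(2*j)) x y)) (at y)"
        apply (rule dsum[where F="\<lambda>j t. a (2*j) x t"]) apply (rule day[OF _ xy]) using nk k2 by auto
      have sOx: "((\<lambda>t. \<Sum>j=0..k-2. (-1)^j*real(n-2-2*j)*a(2*j+1) t y) has_real_derivative (\<Sum>j=0..k-2. (-1)^j*real(n-2-2*j)*pdx (a(2*j+1)) x y)) (at x)"
        apply (rule dsum[where F="\<lambda>j t. a (2*j+1) t y"]) apply (rule dax[OF _ xy]) using nk k2 by auto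
      have sOy: "((\<lambda>t. \<Sum>j=0..k-2. (-1)^j*real(n-2-2*j)*a(2*j+1) x t) has_real_derivative (\<Sum>j=0..k-2. (-1)^j*real(n-2-2*j)*pdy (a(2*j+1)) x y)) (at y)"
        apply (rule dsum[where F="\<lambda>j t. a (2*j+1) x t"]) apply (rule day[OF _ xy]) using nk k2 by auto
      note D1 = DERIV_imp_deriv[OF DERIV_mult[OF sEx dLx[OF xy]]]
      note D2 = DERIV_imp_deriv[OF DERIV_mult[OF DERIV_add[OF DERIV_minus[OF sOy] DERIV_const] dLy[OF xy]]]
      note D3 = DERIV_imp_deriv[OF DERIV_mult[OF DERIV_add[OF sOx DERIV_const] dLx[OF xy]]]
      note D4 = DERIV_imp_deriv[OF DERIV_mult[OF DERIV_add[OF sEy DERIV_const] dLy[OF xy]]]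
      have pw: "(-1::real)^(k-1) = - ((-1)^k)" using k2 by (cases k) auto
      have rn: "real (n-1) = real n - 1" using n3 by simp
      show "case p of (x, y) \<Rightarrow> pdx (\<lambda>x y. (\<Sum>j = 0..k - 1. (-1) ^ j * real (n - 2 * j) * a (2 * j) x y) * \<Lambda> x y) x y
              + pdy (\<lambda>x y. (- (\<Sum>j = 0..k - 2. (-1) ^ j * real (n - 2 - 2 * j) * a (2 * j + 1) x y) + (-1) ^ (k + 1) * real (n - 1) * c1) * \<Lambda> x y) x y = 0
            \<and> pdx (\<lambda>x y. ((\<Sum>j = 0..k - 2. (-1) ^ j * real (n - 2 - 2 * j) * a (2 * j + 1) x y) + (-1) ^ (k + 1) * c1) * \<Lambda> x y) x y
              + pdy (\<lambda>x y. ((\<Sum>j = 0..k - 1. (-1) ^ j * real (n - 2 * j) * a (2 * j) x y) + (-1) ^ (k + 1) * real n * c2) * \<Lambda> x y) x y = 0"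
        unfolding p prod.case pdx_def pdy_def D1 D2 D3 D4
        using ZR[unfolded pdx_def pdy_def] ZI[unfolded pdx_def pdy_def] pw rn by (simp add: algebra_simps)
    qed
  next
    fix k assume nk: "n = 2*k+1"
    have k1: "k \<ge> 1" using n3 nk by simp
    have CE: "(\<Sum>j<k+1. (-1)^j * a (2*j) u v) = (-1)^k * c1" if uv: "(u,v)\<in>\<Omega>" for u v
    proof (rule altC[where M="n-3" and h="\<lambda>j. a (n-3-2*j) u v"])
      have "n - 1 = 2*k" using nk by auto
      then show "a (2*k) u v = c1 + (\<Sum>j\<in>{j. 2*j \<le> n-3}. (-1)^j * a (n-3-2*j) u v)"
        using C1 uv by auto
      show "{j. 2*j \<le> n-3} = {..<k}" using nk k1 by auto
      show "a (n-3-2*j) u v = a (2*(k-1-j)) u v" if "j<k" for j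
      proof -
        have "n-3-2*j = 2*(k-1-j)" using nk that by auto
        then show ?thesis by simp
      qed
    qed
    have CO: "(\<Sum>j<k+1. (-1)^j * a (2*j+1) u v) = (-1)^k * c2" if uv: "(u,v)\<in>\<Omega>" for u v
    proof (rule altC[where M="n-2" and h="\<lambda>j. a (n-2-2*j) u v"])
      show "a (2*k+1) u v = c2 + (\<Sum>j\<in>{j. 2*j \<le> n-2}. (-1)^j * a (n-2-2*j) u v)"
        using C2 uv nk by auto
      show "{j. 2*j \<le> n-2} = {..<k}" using nk k1 by auto
      show "a (n-2-2*j) u v = a (2*(k-1-j)+1) u v" if "j<k" for j
      proof -
        have "n-2-2*j = 2*(k-1-j)+1" using nk that by auto
        then show ?thesis by simp
      qed
    qed
    show "let Te = (\<lambda>x y. \<Sum>j = 0..k - 1. (-1) ^ j * real (n - 1 - 2 * j) * a (2 * j) x y);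
               To = (\<lambda>x y. \<Sum>j = 0..k - 1. (-1) ^ j * real (n - 1 - 2 * j) * a (2 * j + 1) x y)
           in \<forall>(x, y) \<in> \<Omega>.
              pdx (\<lambda>x y. (Te x y + (-1) ^ k * c1) * \<Lambda> x y) x y
              + pdy (\<lambda>x y. (- To x y + (-1) ^ k * real n * c2) * \<Lambda> x y) x y = 0
            \<and> pdx (\<lambda>x y. To x y * \<Lambda> x y) x y
              + pdy (\<lambda>x y. (Te x y + (-1) ^ (k + 1) * real (n - 1) * c1) * \<Lambda> x y) x y = 0"
      unfolding Let_def
    proof (intro ballI)
      fix p assume "p \<in> \<Omega>"
      then obtain x y where p: "p = (x,y)" and xy: "(x,y)\<in>\<Omega>" by (cases p) auto
      have gEx: "((\<lambda>t. \<Sum>j<k+1. (-1)^j * a (2*j) t y) has_real_derivative (\<Sum>j<k+1. (-1)^j * pdx (a (2*j)) x y)) (at x)"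
        apply (rule dsum[where F="\<lambda>j t. a (2*j) t y"]) apply (rule dax[OF _ xy]) using nk by auto
      have gEy: "((\<lambda>t. \<Sum>j<k+1. (-1)^j * a (2*j) x t) has_real_derivative (\<Sum>j<k+1. (-1)^j * pdy (a (2*j)) x y)) (at y)"
        apply (rule dsum[where F="\<lambda>j t. a (2*j) x t"]) apply (rule day[OF _ xy]) using nk by auto
      have gOx: "((\<lambda>t. \<Sum>j<k+1. (-1)^j * a (2*j+1) t y) has_real_derivative (\<Sum>j<k+1. (-1)^j * pdx (a (2*j+1)) x y)) (at x)"
        apply (rule dsum[where F="\<lambda>j t. a (2*j+1) t y"]) apply (rule dax[OF _ xy]) using nk by auto
      have gOy: "((\<lambda>t. \<Sum>j<k+1. (-1)^j * a (2*j+1) x t) has_real_derivative (\<Sum>j<k+1. (-1)^j * pdy (a (2*j+1)) x y)) (at y)"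
        apply (rule dsum[where F="\<lambda>j t. a (2*j+1) x t"]) apply (rule day[OF _ xy]) using nk by auto
      have E0: "(\<Sum>j<k+1. (-1)^j * pdx (a (2*j)) x y) = 0" "(\<Sum>j<k+1. (-1)^j * pdy (a (2*j)) x y) = 0"
        using const_deriv[OF op xy _ gEx gEy, of "(-1)^k * c1"] CE by auto
      have O0: "(\<Sum>j<k+1. (-1)^j * pdx (a (2*j+1)) x y) = 0" "(\<Sum>j<k+1. (-1)^j * pdy (a (2*j+1)) x y) = 0"
        using const_deriv[OF op xy _ gOx gOy, of "(-1)^k * c2"] CO by auto
      have RA: "Re (S (\<lambda>m. pdx (a m) x y)) = 0" "Im (S (\<lambda>m. pdx (a m) x y)) = 0"
               "Re (S (\<lambda>m. pdy (a m) x y)) = 0" "Im (S (\<lambda>m. pdy (a m) x y)) = 0"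
               "Re (S (\<lambda>m. a m x y)) = (-1)^k * c1" "Im (S (\<lambda>m. a m x y)) = (-1)^k * c2"
        unfolding S_def par_odd[OF nk] using E0 O0 CE[OF xy] CO[OF xy] by auto
      have RD: "Re (S (\<lambda>m. real(n-m) * c m)) = (\<Sum>j=0..k-1. (-1)^j * real(n-1-2*j) * c(2*j)) + Re (S c)"
        "Im (S (\<lambda>m. real(n-m) * c m)) = (\<Sum>j=0..k-1. (-1)^j * real(n-1-2*j) * c(2*j+1))" for c
        unfolding S_def using o1[OF nk k1] o2[OF nk k1] by auto
      note ZZ = Z[OF xy]
      note ZR = ReIm_Z(1)[OF ZZ, unfolded RD RA]
      note ZI = ReIm_Z(2)[OF ZZ, unfolded RD RA]
      have sEx: "((\<lambda>t. \<Sum>j=0..k-1. (-1)^j*real(n-1-2*j)*a(2*j) t y) has_real_derivative (\<Sum>j=0..k-1. (-1)^j*real(n-1-2*j)*pdx (a(2*j)) x y)) (at x)"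
        apply (rule dsum[where F="\<lambda>j t. a (2*j) t y"]) apply (rule dax[OF _ xy]) using nk k1 by auto
      have sEy: "((\<lambda>t. \<Sum>j=0..k-1. (-1)^j*real(n-1-2*j)*a(2*j) x t) has_real_derivative (\<Sum>j=0..k-1. (-1)^j*real(n-1-2*j)*pdy (a(2*j)) x y)) (at y)"
        apply (rule dsum[where F="\<lambda>j t. a (2*j) x t"]) apply (rule day[OF _ xy]) using nk k1 by auto
      have sOx: "((\<lambda>t. \<Sum>j=0..k-1. (-1)^j*real(n-1-2*j)*a(2*j+1) t y) has_real_derivative (\<Sum>j=0..k-1. (-1)^j*real(n-1-2*j)*pdx (a(2*j+1)) x y)) (at x)"
        apply (rule dsum[where F="\<lambda>j t. a (2*j+1) t y"]) apply (rule dax[OF _ xy]) using nk k1 by auto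
      have sOy: "((\<lambda>t. \<Sum>j=0..k-1. (-1)^j*real(n-1-2*j)*a(2*j+1) x t) has_real_derivative (\<Sum>j=0..k-1. (-1)^j*real(n-1-2*j)*pdy (a(2*j+1)) x y)) (at y)"
        apply (rule dsum[where F="\<lambda>j t. a (2*j+1) x t"]) apply (rule day[OF _ xy]) using nk k1 by auto
      note D1 = DERIV_imp_deriv[OF DERIV_mult[OF DERIV_add[OF sEx DERIV_const] dLx[OF xy]]]
      note D2 = DERIV_imp_deriv[OF DERIV_mult[OF DERIV_add[OF DERIV_minus[OF sOy] DERIV_const] dLy[OF xy]]]
      note D3 = DERIV_imp_deriv[OF DERIV_mult[OF sOx dLx[OF xy]]]
      note D4 = DERIV_imp_deriv[OF DERIV_mult[OF DERIV_add[OF sEy DERIV_const] dLy[OF xy]]]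
      have rn: "real (n-1) = real n - 1" using n3 by simp
      show "case p of (x, y) \<Rightarrow> pdx (\<lambda>x y. ((\<Sum>j = 0..k - 1. (-1) ^ j * real (n - 1 - 2 * j) * a (2 * j) x y) + (-1) ^ k * c1) * \<Lambda> x y) x y
              + pdy (\<lambda>x y. (- (\<Sum>j = 0..k - 1. (-1) ^ j * real (n - 1 - 2 * j) * a (2 * j + 1) x y) + (-1) ^ k * real n * c2) * \<Lambda> x y) x y = 0
            \<and> pdx (\<lambda>x y. (\<Sum>j = 0..k - 1. (-1) ^ j * real (n - 1 - 2 * j) * a (2 * j + 1) x y) * \<Lambda> x y) x y
              + pdy (\<lambda>x y. ((\<Sum>j = 0..k - 1. (-1) ^ j * real (n - 1 - 2 * j) * a (2 * j) x y) + (-1) ^ (k + 1) * real (n - 1) * c1) * \<Lambda> x y) x y = 0"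
        unfolding p prod.case pdx_def pdy_def D1 D2 D3 D4
        using ZR[unfolded pdx_def pdy_def] ZI[unfolded pdx_def pdy_def] rn by (simp add: algebra_simps)
    qed
  qed
qed
end
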